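(* Let $\mathbb{R}^4_+ := \{x \in \mathbb{R}^4 : x_2^2 + x_3^2 + x_4^2 \le 2x_1x_2 \text{ and } x_1 \ge 0\}$ and let $A \in \mathbb{R}^{4\times 4}$ be the block diagonal matrix $$A = \begin{pmatrix} 0 & 1 & 0 & 0\\ 0 & 0 & 0 & 0 \\ 0 & 0 & 0 & 4\pi \\ 0 & 0 & -\pi & 0\end{pmatrix}.$$ Then $\mathbb{R}^4_+$ is a closed cone with non-empty interior, and the semigroup $(e^{tA})_{t\ge 0}$ is individually eventually nonnegative but not uniformly eventually nonnegative with respect to $\mathbb{R}^4_+$.
   Context: Let $X$ be a finite-dimensional real vector space, ordered by a closed cone $X_+$ with non-empty interior, and $A: X\to X$ linear. $(e^{tA})_{t\ge0}$ is uniformly eventually nonnegative if there is $t_0\ge 0$ with $e^{tA}X_+\subseteq X_+$ for all $t\ge t_0$; individually eventually nonnegative if for each $x\in X_+$ there is $t_0\ge0$ with $e^{tA}x\in X_+$ for all $t\ge t_0$. *)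

theory Defs
  imports "HOL-Analysis.Analysis"
begin

primrec mpow :: "real^'n^'n \<Rightarrow> nat \<Rightarrow> real^'n^'n" where
  "mpow M 0 = mat 1"
| "mpow M (Suc k) = M ** mpow M k"

definition mexp :: "real^'n^'n \<Rightarrow> real^'n^'n" where
  "mexp M = (\<Sum>k. (1 / fact k) *\<^sub>R mpow M k)"

text \<open>The cone R^4_+ (coordinates x1..x4 are the indices 1,2,3,4 of type 4).\<close>

definition K4 :: "(real^4) set" where
  "K4 = {x. (x$2)^2 + (x$3)^2 + (x$4)^2 \<le> 2 * x$1 * x$2 \<and> x$1 \<ge> 0}"

definition A4 :: "real^4^4" where
  "A4 = (\<chi> i j. if i = 1 \<and> j = 2 then 1
               else if i = 3 \<and> j = 4 then 4 * pi
               else if i = 4 \<and> j = 3 then - pi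
               else 0)"

definition closed_cone :: "'a::real_normed_vector set \<Rightarrow> bool" where
  "closed_cone C \<longleftrightarrow> closed C \<and> convex C \<and> cone C \<and> C \<inter> uminus ` C = {0}"

definition unif_ev_nonneg :: "real^'n^'n \<Rightarrow> (real^'n) set \<Rightarrow> bool" where
  "unif_ev_nonneg M C \<longleftrightarrow>
     (\<exists>t0\<ge>0. \<forall>t\<ge>t0. (\<lambda>x. mexp (t *\<^sub>R M) *v x) ` C \<subseteq> C)"

definition indiv_ev_nonneg :: "real^'n^'n \<Rightarrow> (real^'n) set \<Rightarrow> bool" where
  "indiv_ev_nonneg M C \<longleftrightarrow>
     (\<forall>x\<in>C. \<exists>t0\<ge>0. \<forall>t\<ge>t0. mexp (t *\<^sub>R M) *v x \<in> C)"

end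

theory Submission
  imports Defs
begin


lemma sums_vecI:
  fixes f :: "nat \<Rightarrow> 'a::real_normed_vector^'n"
  assumes "\<And>i. (\<lambda>x. f x $ i) sums a $ i"
  shows "f sums a"
  using assms unfolding sums_def by (auto intro!: vec_tendstoI)

definition P :: "real \<Rightarrow> nat \<Rightarrow> real^4^4" where
 "P t k = (\<chi> i j. if i = 1 \<and> j = 1 then (if k = 0 then 1 else 0)
   else if i = 2 \<and> j = 2 then (if k = 0 then 1 else 0)
   else if i = 1 \<and> j = 2 then (if k = 1 then t else 0)
   else if (i = 3 \<and> j = 3) \<or> (i = 4 \<and> j = 4) then cos_coeff k * fact k * (2*pi*t)^k
   else if i = 3 \<and> j = 4 then 2 * sin_coeff k * fact k * (2*pi*t)^k
   else if i = 4 \<and> j = 3 then - (1/2) * sin_coeff k * fact k * (2*pi*t)^k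
   else 0)"

lemma mpow_A4: "mpow (t *\<^sub>R A4) k = P t k"
proof (induction k)
  case 0
  show ?case unfolding P_def mat_def
    by (simp add: vec_eq_iff forall_4 cos_coeff_def sin_coeff_def mat_def)
next
  case (Suc k)
  have "mpow (t *\<^sub>R A4) (Suc k) = (t *\<^sub>R A4) ** P t k" using Suc by simp
  also have "\<dots> = P t (Suc k)"
    unfolding P_def A4_def matrix_matrix_mult_def
    apply (simp add: vec_eq_iff forall_4 sum_4 cos_coeff_Suc sin_coeff_Suc)
    by (auto simp: field_simps)
  finally show ?case .
qed

definition E :: "real \<Rightarrow> real^4^4" where
 "E t = (\<chi> i j. if i = 1 \<and> j = 1 then 1
   else if i = 2 \<and> j = 2 then 1
   else if i = 1 \<and> j = 2 then t
   else if (i = 3 \<and> j = 3) \<or> (i = 4 \<and> j = 4) then cos (2*pi*t)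
   else if i = 3 \<and> j = 4 then 2 * sin (2*pi*t)
   else if i = 4 \<and> j = 3 then - (1/2) * sin (2*pi*t)
   else 0)"

lemma mexp_A4: "mexp (t *\<^sub>R A4) = E t"
proof -
  have c: "(\<lambda>k. cos_coeff k * (2*pi*t)^k) sums cos (2*pi*t)"
    using cos_converges[of "2*pi*t"] by simp
  have s: "(\<lambda>k. sin_coeff k * (2*pi*t)^k) sums sin (2*pi*t)"
    using sin_converges[of "2*pi*t"] by simp
  have s2: "(\<lambda>k. 2 * (sin_coeff k * (2*pi*t)^k)) sums (2 * sin (2*pi*t))"
    using sums_mult[OF s, of 2] by simp
  have s3: "(\<lambda>k. - (sin_coeff k * (2*pi*t)^k / 2)) sums (- (sin (2*pi*t) / 2))"
    using sums_minus[OF sums_divide[OF s, of 2]] by simp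
  have d0: "(\<lambda>k. (if k = 0 then 1 else 0) / fact k) sums (1::real)"
  proof -
    have "(\<lambda>k. (if k = 0 then 1 else 0) / fact k) = (\<lambda>k. if k = 0 then (1::real) else 0)"
      by auto
    then show ?thesis using sums_single[of 0 "\<lambda>_. 1::real"] by simp
  qed
  have d1: "(\<lambda>k. (if k = 1 then t else 0) / fact k) sums t"
  proof -
    have "(\<lambda>k. (if k = 1 then t else 0) / fact k) = (\<lambda>k. if k = 1 then t else 0)"
      by auto
    then show ?thesis using sums_single[of 1 "\<lambda>_. t"] by simp
  qed
  have "(\<lambda>k. (1 / fact k) *\<^sub>R mpow (t *\<^sub>R A4) k) sums E t"
  proof (rule sums_vecI, rule sums_vecI)
    fix i j :: 4
    show "(\<lambda>k. ((1 / fact k) *\<^sub>R mpow (t *\<^sub>R A4) k) $ i $ j) sums E t $ i $ j"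
      unfolding mpow_A4
      using exhaust_4[of i] exhaust_4[of j]
      apply (elim disjE)
      by (simp_all add: P_def E_def c s2 s3 d0 d1 del: One_nat_def)
  qed
  then show ?thesis unfolding mexp_def by (rule sums_unique[symmetric])
qed



lemma add_ineq:
  fixes a1 a2 a3 a4 b1 b2 b3 b4 :: real
  assumes A: "a2^2 + a3^2 + a4^2 \<le> 2*a1*a2" "a1 \<ge> 0"
      and B: "b2^2 + b3^2 + b4^2 \<le> 2*b1*b2" "b1 \<ge> 0"
  shows "(a2+b2)^2 + (a3+b3)^2 + (a4+b4)^2 \<le> 2*(a1+b1)*(a2+b2)"
proof -
  have ea: "a2*(2*a1-a2) = 2*a1*a2 - a2^2" by (simp add: algebra_simps power2_eq_square)
  have eb: "b2*(2*b1-b2) = 2*b1*b2 - b2^2" by (simp add: algebra_simps power2_eq_square)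
  have qa: "a3^2 + a4^2 \<le> a2*(2*a1-a2)" unfolding ea using A(1) by linarith
  have qb: "b3^2 + b4^2 \<le> b2*(2*b1-b2)" unfolding eb using B(1) by linarith
  have a2: "a2 \<ge> 0"
  proof (rule ccontr)
    assume "\<not> a2 \<ge> 0"
    then have "2*a1*a2 \<le> 0" using A(2) by (simp add: mult_nonneg_nonpos)
    moreover have "a2^2 > 0" using \<open>\<not> a2 \<ge> 0\<close> by simp
    moreover have "a3^2 \<ge> 0" "a4^2 \<ge> 0" by simp_all
    ultimately show False using A(1) by linarith
  qed
  have b2: "b2 \<ge> 0"
  proof (rule ccontr)
    assume "\<not> b2 \<ge> 0"
    then have "2*b1*b2 \<le> 0" using B(2) by (simp add: mult_nonneg_nonpos)
    moreover have "b2^2 > 0" using \<open>\<not> b2 \<ge> 0\<close> by simp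
    moreover have "b3^2 \<ge> 0" "b4^2 \<ge> 0" by simp_all
    ultimately show False using B(1) by linarith
  qed
  have ca: "2*a1 - a2 \<ge> 0"
  proof (cases "a2 = 0")
    case True then show ?thesis using A(2) by simp
  next
    case False
    then have "a2 > 0" using a2 by simp
    moreover have "a2*(2*a1-a2) \<ge> 0" using qa zero_le_power2[of a3] zero_le_power2[of a4] by linarith
    ultimately show ?thesis by (simp add: zero_le_mult_iff)
  qed
  have cb: "2*b1 - b2 \<ge> 0"
  proof (cases "b2 = 0")
    case True then show ?thesis using B(2) by simp
  next
    case False
    then have "b2 > 0" using b2 by simp
    moreover have "b2*(2*b1-b2) \<ge> 0" using qb zero_le_power2[of b3] zero_le_power2[of b4] by linarith
    ultimately show ?thesis by (simp add: zero_le_mult_iff)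
  qed
  define U where "U = a2*(2*b1-b2)"
  define V where "V = b2*(2*a1-a2)"
  define w where "w = a3*b3 + a4*b4"
  have U: "U \<ge> 0" unfolding U_def using a2 cb by simp
  have V: "V \<ge> 0" unfolding V_def using b2 ca by simp
  have cs: "w^2 \<le> (a3^2+a4^2)*(b3^2+b4^2)"
  proof -
    have "(a3^2+a4^2)*(b3^2+b4^2) - w^2 = (a3*b4 - a4*b3)^2"
      unfolding w_def by (simp add: algebra_simps power2_eq_square)
    then show ?thesis using zero_le_power2[of "a3*b4 - a4*b3"] by linarith
  qed
  have "(a3^2+a4^2)*(b3^2+b4^2) \<le> (a2*(2*a1-a2))*(b2*(2*b1-b2))"
    by (rule mult_mono[OF qa qb]) (use a2 ca in auto)
  also have "\<dots> = U*V" unfolding U_def V_def by (simp add: algebra_simps)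
  finally have wUV: "w^2 \<le> U*V" using cs by linarith
  have "w \<le> (U+V)/2"
  proof (cases "w \<le> 0")
    case True then show ?thesis using U V by simp
  next
    case False
    have e: "((U+V)/2)^2 = U*V + ((U-V)/2)^2"
      by (simp add: power2_eq_square field_simps)
    have "U*V \<le> ((U+V)/2)^2"
      unfolding e using zero_le_power2[of "(U - V)/2"] by linarith
    then have "w^2 \<le> ((U+V)/2)^2" using wUV by linarith
    then show ?thesis by (rule power2_le_imp_le) (use U V in simp)
  qed
  moreover have e1: "(a2+b2)^2 + (a3+b3)^2 + (a4+b4)^2 = (a2^2+a3^2+a4^2) + (b2^2+b3^2+b4^2) + 2*w + 2*a2*b2"
    unfolding w_def by (simp add: power2_sum)
  moreover have e2: "2*(a1+b1)*(a2+b2) = 2*a1*a2 + 2*b1*b2 + (U+V) + 2*a2*b2"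
    unfolding U_def V_def by (simp add: algebra_simps)
  ultimately show ?thesis unfolding e1 e2 using A(1) B(1) by argo
qed



lemma K4_add: "a \<in> K4 \<Longrightarrow> b \<in> K4 \<Longrightarrow> a + b \<in> K4"
  unfolding K4_def using add_ineq[of "a$2" "a$3" "a$4" "a$1" "b$2" "b$3" "b$4" "b$1"]
  by auto

lemma K4_scale: "a \<in> K4 \<Longrightarrow> c \<ge> 0 \<Longrightarrow> c *\<^sub>R a \<in> K4"
proof -
  assume a: "a \<in> K4" and c: "c \<ge> 0"
  have "(c*a$2)^2 + (c*a$3)^2 + (c*a$4)^2 = c^2 * ((a$2)^2 + (a$3)^2 + (a$4)^2)"
    by (simp add: power_mult_distrib algebra_simps)
  also have "\<dots> \<le> c^2 * (2 * a$1 * a$2)"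
    using a unfolding K4_def by (intro mult_left_mono) auto
  also have "\<dots> = 2 * (c*a$1) * (c*a$2)" by (simp add: power2_eq_square)
  finally show ?thesis using a c unfolding K4_def by simp
qed

lemma K4_closed: "closed K4"
proof -
  have "K4 = {x. (x$2)^2 + (x$3)^2 + (x$4)^2 \<le> 2 * x$1 * x$2} \<inter> {x. 0 \<le> x$1}"
    unfolding K4_def by auto
  also have "closed \<dots>"
    by (intro closed_Int closed_Collect_le continuous_intros)
  finally show ?thesis .
qed

lemma K4_pointed: "K4 \<inter> uminus ` K4 = {0}"
proof
  show "{0} \<subseteq> K4 \<inter> uminus ` K4"
    unfolding K4_def by (auto intro!: image_eqI[where x=0])
next
  show "K4 \<inter> uminus ` K4 \<subseteq> {0}"
  proof
    fix x assume x: "x \<in> K4 \<inter> uminus ` K4"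
    then have x1: "x$1 \<ge> 0" and x2: "(x$2)^2 + (x$3)^2 + (x$4)^2 \<le> 2 * x$1 * x$2"
      unfolding K4_def by auto
    from x obtain y where "y \<in> K4" "x = - y" by auto
    then have "x$1 \<le> 0" unfolding K4_def by auto
    then have "x$1 = 0" using x1 by simp
    then have "(x$2)^2 + (x$3)^2 + (x$4)^2 \<le> 0" using x2 by simp
    then have "(x$2)^2 = 0" "(x$3)^2 = 0" "(x$4)^2 = 0"
      using zero_le_power2[of "x$2"] zero_le_power2[of "x$3"] zero_le_power2[of "x$4"]
      by linarith+
    then have "x$2 = 0" "x$3 = 0" "x$4 = 0" by simp_all
    then show "x \<in> {0}" using \<open>x$1 = 0\<close> by (simp add: vec_eq_iff forall_4)
  qed
qed

lemma K4_closed_cone: "closed_cone K4"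
  unfolding closed_cone_def
  using K4_closed K4_pointed convex_cone[of K4] K4_add K4_scale by blast

lemma K4_interior: "interior K4 \<noteq> {}"
proof -
  define Ob where "Ob = {x::real^4. (x$2)^2 + (x$3)^2 + (x$4)^2 < 2 * x$1 * x$2} \<inter> {x. 0 < x$1}"
  have "open Ob" unfolding Ob_def
    by (intro open_Int open_Collect_less continuous_intros)
  moreover have "Ob \<subseteq> K4" unfolding Ob_def K4_def by auto
  ultimately have "Ob \<subseteq> interior K4" by (rule interior_maximal[rotated])
  moreover have "(\<chi> i. if i = 1 \<or> i = 2 then (1::real) else 0) \<in> Ob"
    unfolding Ob_def by simp
  ultimately show ?thesis by blast
qed



lemma Ev:
  "(E t *v x)$1 = x$1 + t * x$2"
  "(E t *v x)$2 = x$2"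
  "(E t *v x)$3 = cos (2*pi*t) * x$3 + 2 * sin (2*pi*t) * x$4"
  "(E t *v x)$4 = - (1/2) * sin (2*pi*t) * x$3 + cos (2*pi*t) * x$4"
  unfolding matrix_vector_mult_def E_def by (simp_all add: sum_4)

lemma K4_x2: "x \<in> K4 \<Longrightarrow> x$2 \<ge> 0"
proof -
  assume "x \<in> K4"
  then have A: "(x$2)^2 + (x$3)^2 + (x$4)^2 \<le> 2*x$1*x$2" "x$1 \<ge> 0" unfolding K4_def by auto
  show ?thesis
  proof (rule ccontr)
    assume "\<not> x$2 \<ge> 0"
    then have "2*x$1*x$2 \<le> 0" using A(2) by (simp add: mult_nonneg_nonpos)
    moreover have "(x$2)^2 > 0" using \<open>\<not> x$2 \<ge> 0\<close> by simp
    moreover have "(x$3)^2 \<ge> 0" "(x$4)^2 \<ge> 0" by simp_all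
    ultimately show False using A(1) by linarith
  qed
qed

lemma sq_sum_le: "(u + v)^2 \<le> 2*u^2 + 2 * (v::real)^2"
proof -
  have "2*u^2 + 2 * v^2 - (u+v)^2 = (u - v)^2" by (simp add: power2_eq_square algebra_simps)
  then show ?thesis using zero_le_power2[of "u-v"] by linarith
qed

lemma rot_bound:
  fixes c s a b :: real
  assumes "s^2 + c^2 = 1"
  shows "(c*a + 2* s *b)^2 + (- (1/2)* s *a + c*b)^2 \<le> 10*(a^2+b^2)"
proof -
  have c1: "c^2 \<le> 1" and s1: "s^2 \<le> 1" using assms zero_le_power2[of s] zero_le_power2[of c] by linarith+
  have "(c*a + 2* s *b)^2 \<le> 2*(c*a)^2 + 2*(2* s *b)^2" by (rule sq_sum_le)
  also have "\<dots> = 2*(c^2*a^2) + 8*(s^2*b^2)" by (simp add: power_mult_distrib)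
  also have "\<dots> \<le> 2*(1*a^2) + 8*(1*b^2)"
    using c1 s1 by (intro add_mono mult_left_mono mult_right_mono) auto
  finally have 1: "(c*a + 2* s *b)^2 \<le> 2*a^2 + 8*b^2" by simp
  have "(- (1/2)* s *a + c*b)^2 \<le> 2*(- (1/2)* s *a)^2 + 2*(c*b)^2" by (rule sq_sum_le)
  also have "\<dots> = (1/2)*(s^2*a^2) + 2*(c^2*b^2)" by (simp add: power_mult_distrib power2_eq_square)
  also have "\<dots> \<le> (1/2)*(1*a^2) + 2*(1*b^2)"
    using c1 s1 by (intro add_mono mult_left_mono mult_right_mono) auto
  finally have 2: "(- (1/2)* s *a + c*b)^2 \<le> (1/2)*a^2 + 2*b^2" by simp
  show ?thesis using 1 2 zero_le_power2[of a] zero_le_power2[of b] by argo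
qed

lemma indiv: "indiv_ev_nonneg A4 K4"
  unfolding indiv_ev_nonneg_def mexp_A4
proof
  fix x assume x: "x \<in> K4"
  then have A: "(x$2)^2 + (x$3)^2 + (x$4)^2 \<le> 2*x$1*x$2" "x$1 \<ge> 0" unfolding K4_def by auto
  have x2: "x$2 \<ge> 0" using K4_x2[OF x] .
  show "\<exists>t0\<ge>0. \<forall>t\<ge>t0. E t *v x \<in> K4"
  proof (cases "x$2 = 0")
    case True
    then have "(x$3)^2 + (x$4)^2 \<le> 0" using A(1) by simp
    then have "(x$3)^2 = 0" "(x$4)^2 = 0" using zero_le_power2[of "x$3"] zero_le_power2[of "x$4"]
      by linarith+
    then have "x$3 = 0" "x$4 = 0" by simp_all
    then show ?thesis using True A(2) by (intro exI[of _ 0]) (simp add: K4_def Ev)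
  next
    case False
    then have p: "x$2 > 0" using x2 by simp
    define M where "M = 10*((x$3)^2+(x$4)^2)"
    define t0 where "t0 = ((x$2)^2 + M)/(2*(x$2)^2)"
    have M0: "M \<ge> 0" unfolding M_def by simp
    have t0: "t0 \<ge> 0" unfolding t0_def using M0 by simp
    have "\<forall>t\<ge>t0. E t *v x \<in> K4"
    proof (intro allI impI)
      fix t assume t: "t \<ge> t0"
      have sq: "(sin (2*pi*t))^2 + (cos (2*pi*t))^2 = 1" by (rule sin_cos_squared_add)
      have b: "((E t *v x)$3)^2 + ((E t *v x)$4)^2 \<le> M"
        unfolding Ev M_def by (rule rot_bound[OF sq])
      have "2*t0*(x$2)^2 = (x$2)^2 + M" unfolding t0_def using p by simp
      moreover have "2*t0*(x$2)^2 \<le> 2*t*(x$2)^2" using t by (simp add: mult_right_mono)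
      moreover have "2*x$1*x$2 \<ge> 0" using A(2) x2 by simp
      moreover have "2 * (x$1 + t*x$2) * x$2 = 2*x$1*x$2 + 2*t*(x$2)^2"
        by (simp add: power2_eq_square algebra_simps)
      ultimately have "(x$2)^2 + ((E t *v x)$3)^2 + ((E t *v x)$4)^2 \<le> 2 * (x$1 + t*x$2) * x$2"
        using b by linarith
      moreover have "x$1 + t*x$2 \<ge> 0" using A(2) t t0 x2 by simp
      ultimately show "E t *v x \<in> K4" unfolding K4_def by (simp add: Ev)
    qed
    then show ?thesis using t0 by blast
  qed
qed

lemma not_unif: "\<not> unif_ev_nonneg A4 K4"
  unfolding unif_ev_nonneg_def mexp_A4
proof
  assume "\<exists>t0\<ge>0. \<forall>t\<ge>t0. (\<lambda>x. E t *v x) ` K4 \<subseteq> K4"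
  then obtain t0 where t0: "t0 \<ge> 0" "\<forall>t\<ge>t0. (\<lambda>x. E t *v x) ` K4 \<subseteq> K4" by blast
  define n where "n = nat \<lceil>t0\<rceil>"
  define t where "t = real n + 1/4"
  have tt0: "t \<ge> t0" unfolding t_def n_def by linarith
  have "2*pi*t = pi/2 + 2 * real n * pi" unfolding t_def by (simp add: algebra_simps)
  then have cs: "cos (2*pi*t) = 0" "sin (2*pi*t) = 1" by (simp_all add: cos_add sin_add)
  define x :: "real^4" where "x = (\<chi> i. if i = 1 then (1 + (t+1)^2)/2 else if i = 2 then 1
      else if i = 3 then 0 else t+1)"
  have xK: "x \<in> K4" unfolding K4_def x_def by (simp add: add_nonneg_nonneg)
  have "E t *v x \<in> K4" using t0(2) tt0 xK by blast
  then have "1 + (2*(t+1))^2 \<le> 2 * ((1 + (t+1)^2)/2 + t)"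
    unfolding K4_def by (simp add: Ev cs x_def)
  moreover have "t \<ge> 0" unfolding t_def by simp
  ultimately show False by (simp add: power2_eq_square algebra_simps) (smt (verit) mult_nonneg_nonneg)
qed

theorem mainTheorem4:
  shows "closed_cone K4 \<and> interior K4 \<noteq> {}
         \<and> indiv_ev_nonneg A4 K4 \<and> \<not> unif_ev_nonneg A4 K4"
  using K4_closed_cone K4_interior indiv not_unif by blast


end
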